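(* Let $(G,b,x,k)$ be an instance of Collapsed $k$-Core and let $G'$ be the graph obtained from $G$ by adding a new vertex $u$ adjacent to all vertices of $G$. Then $(G,b,x,k)$ is a yes-instance if and only if $(G',b+1,x,k)$ is a yes-instance.
   Context: For an integer $k$, the $k$-core of a graph $G$ is the (uniquely determined) largest induced subgraph of $G$ in which every vertex has degree at least $k$ (possibly empty); its size is its number of vertices. Collapsed $k$-Core: given an undirected graph $G=(V,E)$ and integers $b$, $x$, $k$, decide whether there is a set $S\subseteq V$ with $|S|\le b$ such that the $k$-core of $G-S$ has at most $x$ vertices. *)

theory Defs
  imports Main
begin

definition simple_graph :: "'a set \<Rightarrow> ('a \<Rightarrow> 'a \<Rightarrow> bool) \<Rightarrow> bool" where
  "simple_graph V E \<longleftrightarrow> finite V \<and> (\<forall>v w. E v w \<longrightarrow> E w v)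
     \<and> (\<forall>v. \<not> E v v) \<and> (\<forall>v w. E v w \<longrightarrow> v \<in> V \<and> w \<in> V)"

definition min_deg_ge :: "('a \<Rightarrow> 'a \<Rightarrow> bool) \<Rightarrow> nat \<Rightarrow> 'a set \<Rightarrow> bool" where
  "min_deg_ge E k C \<longleftrightarrow> (\<forall>v\<in>C. k \<le> card {w \<in> C. E v w})"

text \<open>Size of the k-core of the graph induced on V: the number of vertices of the
  largest induced subgraph of minimum degree at least k (the empty set qualifies).\<close>
definition kcore_size :: "'a set \<Rightarrow> ('a \<Rightarrow> 'a \<Rightarrow> bool) \<Rightarrow> nat \<Rightarrow> nat" where
  "kcore_size V E k = Max (card ` {C. C \<subseteq> V \<and> min_deg_ge E k C})"

definition collapsed_kcore :: "'a set \<Rightarrow> ('a \<Rightarrow> 'a \<Rightarrow> bool) \<Rightarrow> nat \<Rightarrow> nat \<Rightarrow> nat \<Rightarrow> bool" where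
  "collapsed_kcore V E b x k \<longleftrightarrow>
     (\<exists>S. S \<subseteq> V \<and> card S \<le> b \<and> kcore_size (V - S) E k \<le> x)"

definition add_universal :: "'a \<Rightarrow> 'a set \<Rightarrow> ('a \<Rightarrow> 'a \<Rightarrow> bool) \<Rightarrow> ('a \<Rightarrow> 'a \<Rightarrow> bool)" where
  "add_universal u V E = (\<lambda>v w. E v w \<or> (v = u \<and> w \<in> V) \<or> (w = u \<and> v \<in> V))"

end

theory Submission
  imports Defs
begin

lemma kcore_le:
  assumes "finite V"
  shows "kcore_size V E k \<le> x \<longleftrightarrow> (\<forall>C. C \<subseteq> V \<and> min_deg_ge E k C \<longrightarrow> card C \<le> x)"
proof -
  let ?A = "card ` {C. C \<subseteq> V \<and> min_deg_ge E k C}"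
  have fin: "finite ?A" using assms by (intro finite_imageI) (auto intro: finite_subset[of _ "Pow V"])
  have ne: "?A \<noteq> {}" by (auto simp: min_deg_ge_def intro!: image_eqI[of _ _ "{}"])
  show ?thesis unfolding kcore_size_def using Max_le_iff[OF fin ne] by auto
qed

lemma mdeg_sub:
  assumes "u \<notin> V" "C \<subseteq> V"
  shows "min_deg_ge (add_universal u V E) k C \<longleftrightarrow> min_deg_ge E k C"
proof -
  have "\<And>v. v \<in> C \<Longrightarrow> {w \<in> C. add_universal u V E v w} = {w \<in> C. E v w}"
    using assms by (auto simp: add_universal_def)
  thus ?thesis by (simp add: min_deg_ge_def)
qed

theorem mainTheorem9:
  fixes V :: "'a set" and E :: "'a \<Rightarrow> 'a \<Rightarrow> bool" and u :: 'a and b x k :: nat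
  assumes "simple_graph V E" and "u \<notin> V"
  shows "collapsed_kcore V E b x k \<longleftrightarrow>
         collapsed_kcore (insert u V) (add_universal u V E) (b + 1) x k"
proof -
  let ?E = "add_universal u V E"
  have finV: "finite V" and irr: "\<And>v. \<not> E v v" using assms(1) by (auto simp: simple_graph_def)
  show ?thesis
  proof
    assume "collapsed_kcore V E b x k"
    then obtain S where S: "S \<subseteq> V" "card S \<le> b" "kcore_size (V - S) E k \<le> x"
      by (auto simp: collapsed_kcore_def)
    have fS: "finite S" using S(1) finV finite_subset by blast
    have "insert u V - insert u S = V - S" using assms(2) by auto
    moreover have "card (insert u S) \<le> b + 1" using S(2) fS by (simp add: card_insert_if)
    moreover have "kcore_size (V - S) ?E k \<le> x"
      unfolding kcore_le[OF finite_Diff[OF finV]]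
    proof (intro allI impI)
      fix C assume C: "C \<subseteq> V - S \<and> min_deg_ge ?E k C"
      hence "min_deg_ge E k C" using mdeg_sub[OF assms(2), of C] by auto
      thus "card C \<le> x" using C S(3) unfolding kcore_le[OF finite_Diff[OF finV]] by blast
    qed
    ultimately show "collapsed_kcore (insert u V) ?E (b + 1) x k"
      unfolding collapsed_kcore_def using S(1)
      by (intro exI[of _ "insert u S"]) auto
  next
    assume "collapsed_kcore (insert u V) ?E (b + 1) x k"
    then obtain S' where S': "S' \<subseteq> insert u V" "card S' \<le> b + 1"
        "kcore_size (insert u V - S') ?E k \<le> x"
      by (auto simp: collapsed_kcore_def)
    have fS': "finite S'" using S'(1) finV finite_subset by blast
    have core': "\<And>C. C \<subseteq> insert u V - S' \<Longrightarrow> min_deg_ge ?E k C \<Longrightarrow> card C \<le> x"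
      using S'(3) finV by (auto simp: kcore_le)
    show "collapsed_kcore V E b x k"
    proof (cases "u \<in> S'")
      case True
      let ?S = "S' - {u}"
      have "card ?S \<le> b" using S'(2) True fS' by simp
      moreover have "kcore_size (V - ?S) E k \<le> x"
        unfolding kcore_le[OF finite_Diff[OF finV]]
      proof (intro allI impI)
        fix C assume C: "C \<subseteq> V - ?S \<and> min_deg_ge E k C"
        have CV: "C \<subseteq> V" using C by blast
        have "C \<subseteq> insert u V - S'" using C assms(2) by blast
        thus "card C \<le> x" using core'[of C] mdeg_sub[OF assms(2) CV] C by blast
      qed
      ultimately show ?thesis unfolding collapsed_kcore_def using S'(1)
        by (intro exI[of _ ?S]) auto
    next
      case False
      hence S'V: "S' \<subseteq> V" using S'(1) by auto
      show ?thesis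
      proof (cases "S' = {}")
        case True
        have "kcore_size (V - {}) E k \<le> x"
          unfolding kcore_le[OF finite_Diff[OF finV]]
        proof (intro allI impI)
          fix C assume C: "C \<subseteq> V - {} \<and> min_deg_ge E k C"
          thus "card C \<le> x" using core'[of C] mdeg_sub[OF assms(2), of C] True by auto
        qed
        thus ?thesis unfolding collapsed_kcore_def by (intro exI[of _ "{}"]) auto
      next
        case False
        then obtain v where v: "v \<in> S'" by auto
        let ?S = "S' - {v}"
        have "card ?S \<le> b" using S'(2) v fS' by simp
        moreover have "kcore_size (V - ?S) E k \<le> x"
          unfolding kcore_le[OF finite_Diff[OF finV]]
        proof (intro allI impI)
          fix C assume C: "C \<subseteq> V - ?S \<and> min_deg_ge E k C"
          have fC: "finite C" using C finV finite_subset by blast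
          show "card C \<le> x"
          proof (cases "C = {}")
            case True thus ?thesis by simp
          next
            case False
            then obtain w where w: "w \<in> C" by auto
            have "k \<le> card {w' \<in> C. E w w'}" using C w by (auto simp: min_deg_ge_def)
            also have "\<dots> \<le> card (C - {w})" using irr fC by (intro card_mono) auto
            also have "\<dots> < card C" using w fC by (metis card_Diff1_less)
            finally have kC: "k < card C" .
            let ?C = "insert u (C - {v})"
            have sub: "?C \<subseteq> insert u V - S'" using C \<open>u \<notin> S'\<close> by auto
            have md: "min_deg_ge ?E k ?C"
              unfolding min_deg_ge_def
            proof
              fix y assume y: "y \<in> ?C"
              show "k \<le> card {w' \<in> ?C. ?E y w'}"
              proof (cases "y = u")
                case True
                have "C - {v} \<subseteq> {w' \<in> ?C. ?E y w'}" using True C by (auto simp: add_universal_def)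
                hence "card (C - {v}) \<le> card {w' \<in> ?C. ?E y w'}" using fC by (intro card_mono) auto
                moreover have "k \<le> card (C - {v})" using kC fC by (cases "v \<in> C") auto
                ultimately show ?thesis by simp
              next
                case False
                hence yC: "y \<in> C" "y \<in> V" using y C by auto
                let ?N = "{w' \<in> C. E y w'}"
                have "insert u (?N - {v}) \<subseteq> {w' \<in> ?C. ?E y w'}"
                  using yC by (auto simp: add_universal_def)
                hence "card (insert u (?N - {v})) \<le> card {w' \<in> ?C. ?E y w'}"
                  using fC by (intro card_mono) auto
                moreover have "card ?N \<le> card (insert u (?N - {v}))"
                proof -
                  have "u \<notin> ?N - {v}" using C assms(2) by auto
                  hence "card (insert u (?N - {v})) = Suc (card (?N - {v}))" using fC by simp
                  moreover have "card ?N \<le> Suc (card (?N - {v}))"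
                    using fC by (cases "v \<in> ?N") (auto simp: card_Diff_singleton)
                  ultimately show ?thesis by simp
                qed
                moreover have "k \<le> card ?N" using C yC by (auto simp: min_deg_ge_def)
                ultimately show ?thesis by simp
              qed
            qed
            have "card C \<le> card ?C"
            proof -
              have "u \<notin> C - {v}" using C assms(2) by auto
              hence "card ?C = Suc (card (C - {v}))" using fC by simp
              moreover have "card C \<le> Suc (card (C - {v}))"
                using fC by (cases "v \<in> C") (auto simp: card_Diff_singleton)
              ultimately show ?thesis by simp
            qed
            also have "\<dots> \<le> x" using core'[OF sub md] .
            finally show ?thesis .
          qed
        qed
        ultimately show ?thesis unfolding collapsed_kcore_def using S'V
          by (intro exI[of _ ?S]) auto
      qed
    qed
  qed
qed

end
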